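(* For every non-trivial projective core $H$ there exist a graph $F$ and two vertices $u^*,v^*\in V(F)$ such that: (a) for all $x,y\in V(H)$ with $x\ne y$ there is a homomorphism $f\colon F\to H$ with $f(u^* )=x$ and $f(v^* )=y$; (b) every homomorphism $f\colon F\to H$ satisfies $f(u^* )\ne f(v^* )$.
   Context: Graphs are finite, undirected, without parallel edges, loops allowed; $K_1^*$ is the one-vertex graph with a loop. A homomorphism is an edge-preserving vertex map. A core is a graph with no homomorphism to a proper subgraph of itself; a core is trivial if isomorphic to $K_1$, $K_1^*$ or $K_2$, non-trivial otherwise. The direct product $H_1\times H_2$ has vertex set $V(H_1)\times V(H_2)$ with $(x_1,y_1)(x_2,y_2)$ an edge iff $x_1x_2\in E(H_1)$ and $y_1y_2\in E(H_2)$; $H^m$ is the $m$-fold product and $\pi_i(x_1,\dots,x_m)=x_i$. A homomorphism $f\colon H^m\to H$ is idempotent if $f(x,\dots,x)=x$ for all $x$. $H$ is projective if for every $m\ge2$ every idempotent homomorphism $H^m\to H$ equals some $\pi_i$. *)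

theory Defs
  imports Main
begin

type_synonym 'a graph = "'a set \<times> ('a \<times> 'a) set"

definition is_graph :: "'a graph \<Rightarrow> bool" where
  "is_graph G \<longleftrightarrow> finite (fst G) \<and> snd G \<subseteq> fst G \<times> fst G \<and> sym (snd G)"

definition is_hom :: "'a graph \<Rightarrow> 'b graph \<Rightarrow> ('a \<Rightarrow> 'b) \<Rightarrow> bool" where
  "is_hom G H f \<longleftrightarrow> (\<forall>x\<in>fst G. f x \<in> fst H) \<and> (\<forall>(x,y)\<in>snd G. (f x, f y) \<in> snd H)"

definition is_subgraph :: "'a graph \<Rightarrow> 'a graph \<Rightarrow> bool" where
  "is_subgraph G' G \<longleftrightarrow> is_graph G' \<and> fst G' \<subseteq> fst G \<and> snd G' \<subseteq> snd G"

definition is_core :: "'a graph \<Rightarrow> bool" where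
  "is_core H \<longleftrightarrow> is_graph H \<and>
     \<not> (\<exists>H' f. is_subgraph H' H \<and> H' \<noteq> H \<and> is_hom H H' f)"

definition graph_iso :: "'a graph \<Rightarrow> 'b graph \<Rightarrow> bool" where
  "graph_iso G H \<longleftrightarrow> (\<exists>f. bij_betw f (fst G) (fst H) \<and>
     (\<forall>x\<in>fst G. \<forall>y\<in>fst G. (x,y) \<in> snd G \<longleftrightarrow> (f x, f y) \<in> snd H))"

definition K1 :: "nat graph" where "K1 = ({0}, {})"
definition K1_loop :: "nat graph" where "K1_loop = ({0}, {(0,0)})"
definition K2 :: "nat graph" where "K2 = ({0,1}, {(0,1),(1,0)})"

definition trivial_core :: "'a graph \<Rightarrow> bool" where
  "trivial_core H \<longleftrightarrow> graph_iso H K1 \<or> graph_iso H K1_loop \<or> graph_iso H K2"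

definition graph_power :: "'a graph \<Rightarrow> nat \<Rightarrow> 'a list graph" where
  "graph_power H m =
     ({xs. length xs = m \<and> set xs \<subseteq> fst H},
      {(xs, ys). length xs = m \<and> length ys = m \<and> (\<forall>i<m. (xs ! i, ys ! i) \<in> snd H)})"

definition idempotent_map :: "'a graph \<Rightarrow> nat \<Rightarrow> ('a list \<Rightarrow> 'a) \<Rightarrow> bool" where
  "idempotent_map H m f \<longleftrightarrow> (\<forall>x\<in>fst H. f (replicate m x) = x)"

definition projective :: "'a graph \<Rightarrow> bool" where
  "projective H \<longleftrightarrow> (\<forall>m\<ge>2. \<forall>f. is_hom (graph_power H m) H f \<and> idempotent_map H m f \<longrightarrow>
     (\<exists>i<m. \<forall>xs\<in>fst (graph_power H m). f xs = xs ! i))"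

end

theory Submission
  imports Defs
begin

lemma nat_copy:
  assumes "is_graph (G :: 'b graph)"
  shows "\<exists>(F::nat graph) h. is_graph F \<and> bij_betw h (fst F) (fst G) \<and>
    (\<forall>(H::'a graph) g. is_hom G H g \<longrightarrow> is_hom F H (g \<circ> h)) \<and>
    (\<forall>(H::'a graph) f. is_hom F H f \<longrightarrow> is_hom G H (f \<circ> inv_into (fst F) h))"
proof -
  obtain V E where G: "G = (V,E)" by (cases G)
  have fin: "finite V" and EV: "E \<subseteq> V \<times> V" and sy: "sym E" using assms G by (auto simp: is_graph_def)
  obtain h where h: "bij_betw h {0..<card V} V" using ex_bij_betw_nat_finite[OF fin] by blast
  define N where "N = card V"
  define F :: "nat graph" where "F = ({0..<N}, {(i,j). i<N \<and> j<N \<and> (h i, h j) \<in> E})"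
  have "is_graph F" using sy unfolding F_def is_graph_def by (auto simp: sym_def)
  moreover have "bij_betw h (fst F) (fst G)" using h G F_def N_def by simp
  moreover have "\<forall>(H::'a graph) g. is_hom G H g \<longrightarrow> is_hom F H (g \<circ> h)"
    using h unfolding is_hom_def F_def G N_def bij_betw_def by auto
  moreover have "\<forall>(H::'a graph) f. is_hom F H f \<longrightarrow> is_hom G H (f \<circ> inv_into (fst F) h)"
  proof (intro allI impI)
    fix H :: "'a graph" and f assume f: "is_hom F H f"
    have i1: "x \<in> V \<Longrightarrow> inv_into {0..<N} h x \<in> {0..<N}" for x
      using h N_def by (metis bij_betw_def inv_into_into)
    have i2: "x \<in> V \<Longrightarrow> h (inv_into {0..<N} h x) = x" for x
      using h N_def by (metis bij_betw_def f_inv_into_f)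
    show "is_hom G H (f \<circ> inv_into (fst F) h)"
      unfolding is_hom_def G
    proof (intro conjI ballI)
      fix x assume "x \<in> fst (V,E)"
      then show "(f \<circ> inv_into (fst F) h) x \<in> fst H" using f i1 unfolding is_hom_def F_def by auto
    next
      fix p assume p: "p \<in> snd (V,E)"
      obtain x y where xy: "p = (x,y)" by (cases p)
      have "x \<in> V" "y \<in> V" using p xy EV by auto
      then have "(inv_into {0..<N} h x, inv_into {0..<N} h y) \<in> snd F"
        using i1 i2 p xy unfolding F_def by auto
      then show "case p of (x, y) \<Rightarrow> ((f \<circ> inv_into (fst F) h) x, (f \<circ> inv_into (fst F) h) y) \<in> snd H"
        using f xy unfolding is_hom_def by (auto simp: F_def)
    qed
  qed
  ultimately show ?thesis by blast
qed

lemma core_auto: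
  assumes "is_core (H :: 'a graph)" "is_hom H H s"
  shows "is_hom H H (inv_into (fst H) s) \<and> (\<forall>x\<in>fst H. inv_into (fst H) s (s x) = x)"
proof -
  obtain V E where H: "H = (V,E)" by (cases H)
  have gr: "is_graph H" using assms(1) by (simp add: is_core_def)
  have fin: "finite V" and EV: "E \<subseteq> V \<times> V" and sy: "sym E" using gr H by (auto simp: is_graph_def)
  have sV: "s ` V \<subseteq> V" and sE: "\<And>x y. (x,y) \<in> E \<Longrightarrow> (s x, s y) \<in> E"
    using assms(2) H unfolding is_hom_def by auto
  have surj: "s ` V = V"
  proof (rule ccontr)
    assume ne: "s ` V \<noteq> V"
    define H' where "H' = (s ` V, E \<inter> (s ` V \<times> s ` V))"
    have "is_subgraph H' H" unfolding is_subgraph_def is_graph_def H'_def H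
      using fin sV sy by (auto simp: sym_def)
    moreover have "H' \<noteq> H" using ne H'_def H by auto
    moreover have "is_hom H H' s" unfolding is_hom_def H'_def H using sE EV by auto
    ultimately show False using assms(1) unfolding is_core_def by blast
  qed
  have inj: "inj_on s V" using finite_surj_inj[OF fin] surj by simp
  define m where "m = (\<lambda>(x,y). (s x, s y))"
  have finE: "finite E" using fin EV by (meson finite_SigmaI finite_subset)
  have "m ` E \<subseteq> E" using sE m_def by auto
  moreover have "inj_on m E" using inj EV unfolding m_def inj_on_def by auto
  ultimately have mE: "m ` E = E" using endo_inj_surj[OF finE] by blast
  have li: "\<forall>x\<in>V. inv_into V s (s x) = x" using inj by simp
  have "is_hom H H (inv_into V s)"
    unfolding is_hom_def H
  proof (intro conjI ballI)
    fix x assume "x \<in> fst (V,E)" then show "inv_into V s x \<in> fst (V,E)"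
      using surj by (metis fst_conv inv_into_into)
  next
    fix p assume p: "p \<in> snd (V,E)"
    then have "p \<in> m ` E" using mE by simp
    then obtain a b where ab: "(a,b) \<in> E" "p = (s a, s b)" unfolding m_def by auto
    have "a \<in> V" "b \<in> V" using ab EV by auto
    then show "case p of (x, y) \<Rightarrow> (inv_into V s x, inv_into V s y) \<in> snd (V,E)"
      using ab li by auto
  qed
  then show ?thesis using li H by simp
qed


lemma card1_trivial:
  assumes "is_graph (H::'a graph)" "fst H = {a}"
  shows "trivial_core H"
proof -
  obtain V E where H: "H = (V,E)" by (cases H)
  have "E \<subseteq> {(a,a)}" using assms H by (auto simp: is_graph_def)
  then have "E = {} \<or> E = {(a,a)}" by blast
  moreover have b: "bij_betw (\<lambda>_. 0::nat) {a} {0}" by (simp add: bij_betw_def)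
  ultimately show ?thesis unfolding trivial_core_def graph_iso_def K1_def K1_loop_def
    using assms H by (metis empty_iff fst_conv insert_iff singletonD snd_conv)
qed

theorem lemma9:
  fixes H :: "'a graph"
  assumes "is_core H" and "\<not> trivial_core H" and "projective H"
  shows "\<exists>(F :: nat graph) u v. is_graph F \<and> u \<in> fst F \<and> v \<in> fst F \<and>
           (\<forall>x\<in>fst H. \<forall>y\<in>fst H. x \<noteq> y \<longrightarrow>
              (\<exists>f. is_hom F H f \<and> f u = x \<and> f v = y)) \<and>
           (\<forall>f. is_hom F H f \<longrightarrow> f u \<noteq> f v)"
proof (cases "fst H = {}")
  case True
  have "is_graph (({0}, {}) :: nat graph)" by (simp add: is_graph_def sym_def)
  moreover have "\<forall>f. \<not> is_hom (({0}, {}) :: nat graph) H f" using True by (simp add: is_hom_def)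
  ultimately show ?thesis using True by (intro exI[of _ "({0}, {}) :: nat graph"] exI[of _ "0::nat"]) auto
next
  case False
  then obtain a where a: "a \<in> fst H" by auto
  have gr: "is_graph H" using assms(1) by (simp add: is_core_def)
  have fin: "finite (fst H)" using gr by (simp add: is_graph_def)
  obtain b where b: "b \<in> fst H" "b \<noteq> a"
    using card1_trivial[OF gr, of a] assms(2) a by blast
  define D where "D = {(x,y). x \<in> fst H \<and> y \<in> fst H \<and> x \<noteq> y}"
  have "D \<subseteq> fst H \<times> fst H" unfolding D_def by auto
  then have finD: "finite D" using fin by (meson finite_SigmaI finite_subset)
  obtain P where P: "set P = D" using finite_list[OF finD] by blast
  define k where "k = length P"
  have "{(a,b),(b,a)} \<subseteq> D" using a b D_def by auto
  then have "card {(a,b),(b,a)} \<le> card D" using finD card_mono by blast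
  also have "\<dots> \<le> k" using P k_def card_length by metis
  finally have k2: "k \<ge> 2" using b by simp
  define G where "G = graph_power H k"
  have grG: "is_graph G"
  proof -
    have "fst G \<subseteq> {xs. set xs \<subseteq> fst H \<and> length xs = k}" unfolding G_def graph_power_def by auto
    then have "finite (fst G)" using finite_lists_length_eq[OF fin] finite_subset by blast
    moreover have "snd G \<subseteq> fst G \<times> fst G" using gr unfolding G_def graph_power_def is_graph_def
      by (auto simp: in_set_conv_nth) blast+
    moreover have "sym (snd G)" using gr unfolding G_def graph_power_def is_graph_def sym_def by auto
    ultimately show ?thesis by (simp add: is_graph_def)
  qed
  define u0 where "u0 = map fst P"
  define v0 where "v0 = map snd P"
  have u0G: "u0 \<in> fst G" "v0 \<in> fst G" using P D_def unfolding u0_def v0_def G_def graph_power_def k_def by auto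
  have A: "\<exists>g. is_hom G H g \<and> g u0 = x \<and> g v0 = y" if "x \<in> fst H" "y \<in> fst H" "x \<noteq> y" for x y
  proof -
    have "(x,y) \<in> set P" using that P D_def by auto
    then obtain i where i: "i < k" "P ! i = (x,y)" unfolding k_def by (metis in_set_conv_nth)
    have "is_hom G H (\<lambda>xs. xs ! i)" unfolding is_hom_def G_def graph_power_def using i by auto
    moreover have "u0 ! i = x" "v0 ! i = y" using i unfolding u0_def v0_def k_def by auto
    ultimately show ?thesis by blast
  qed
  have B: "g u0 \<noteq> g v0" if g: "is_hom G H g" for g
  proof -
    define s where "s = (\<lambda>c. g (replicate k c))"
    have "is_hom H G (\<lambda>c. replicate k c)" unfolding is_hom_def G_def graph_power_def by auto
    then have sh: "is_hom H H s" using g unfolding s_def is_hom_def by fastforce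
    define t where "t = inv_into (fst H) s"
    have t: "is_hom H H t" "\<forall>x\<in>fst H. t (s x) = x" using core_auto[OF assms(1) sh] t_def by auto
    define g' where "g' = t \<circ> g"
    have "is_hom G H g'" using g t(1) unfolding g'_def is_hom_def by fastforce
    moreover have "idempotent_map H k g'" using t(2) unfolding idempotent_map_def g'_def s_def by simp
    ultimately obtain i where i: "i < k" "\<forall>xs\<in>fst G. g' xs = xs ! i"
      using assms(3) k2 unfolding projective_def G_def by blast
    have "P ! i \<in> D" using P i k_def by (metis nth_mem)
    then have "u0 ! i \<noteq> v0 ! i" using i unfolding u0_def v0_def k_def D_def by auto
    then have "g' u0 \<noteq> g' v0" using i u0G by simp
    then show ?thesis unfolding g'_def by auto
  qed
  obtain F :: "nat graph" and h where F: "is_graph F" "bij_betw h (fst F) (fst G)"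
    "\<forall>(H::'a graph) g. is_hom G H g \<longrightarrow> is_hom F H (g \<circ> h)"
    "\<forall>(H::'a graph) f. is_hom F H f \<longrightarrow> is_hom G H (f \<circ> inv_into (fst F) h)"
    using nat_copy[OF grG] by blast
  define u where "u = inv_into (fst F) h u0"
  define v where "v = inv_into (fst F) h v0"
  have uv: "u \<in> fst F" "v \<in> fst F" "h u = u0" "h v = v0"
    using F(2) u0G unfolding u_def v_def by (auto simp: bij_betw_def inv_into_into f_inv_into_f)
  show ?thesis
  proof (intro exI conjI)
    show "is_graph F" "u \<in> fst F" "v \<in> fst F" using F uv by auto
    show "\<forall>x\<in>fst H. \<forall>y\<in>fst H. x \<noteq> y \<longrightarrow> (\<exists>f. is_hom F H f \<and> f u = x \<and> f v = y)"
    proof (intro ballI impI)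
      fix x y assume "x \<in> fst H" "y \<in> fst H" "x \<noteq> y"
      then obtain g where "is_hom G H g" "g u0 = x" "g v0 = y" using A by blast
      moreover from this(1) have "is_hom F H (g \<circ> h)" using F(3) by blast
      ultimately show "\<exists>f. is_hom F H f \<and> f u = x \<and> f v = y" using uv by (intro exI[of _ "g \<circ> h"]) simp
    qed
    show "\<forall>f. is_hom F H f \<longrightarrow> f u \<noteq> f v"
    proof (intro allI impI)
      fix f assume "is_hom F H f"
      then have "(f \<circ> inv_into (fst F) h) u0 \<noteq> (f \<circ> inv_into (fst F) h) v0" using F(4) B by blast
      then show "f u \<noteq> f v" unfolding u_def v_def by simp
    qed
  qed
qed

end
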